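(* Let $D$ be a Dyck path of semilength $n$ with row-area sequence $(r_0,r_1,\dots,r_n)$ and column-area sequence $(c_1,\dots,c_{n+1})$, and let $\mathcal F=\{k\in\{1,\dots,n\}: r_{k+1+c_{k+1}}=r_{k-1}+c_{k+1}+2\}$. Let $\pi$ be the permutation associated with $D$ by the Billey–Jockusch–Stanley bijection. Then $k\in\mathcal F$ if and only if $\pi(k)=k$.
   Context: Work in an $n\times n$ array of unit cells; the cell $(i,j)$ is the one in column $i$ (columns numbered $1,\dots,n$ from left to right) and row $j$ (rows numbered $1,\dots,n$ from bottom to top), i.e. the square $[i-1,i]\times[j-1,j]$. A Dyck path of semilength $n$ is a lattice path from $(0,0)$ to $(n,n)$ with unit north and east steps that never goes below the line $y=x$. Row-area sequence: $r_0=-1$ and, for $1\le k\le n$, $r_k$ is the number of full cells in row $k$ strictly between the $k$-th north step of $D$ and the diagonal; equivalently, if the $k$-th north step lies on the vertical line $x=x_k$, then $r_k=k-1-x_k$. Column-area sequence: for $1\le k\le n$, $c_k$ is the number of full cells in column $k$ strictly between the $k$-th east step and the diagonal; equivalently, if the $k$-th east step lies at height $y_k$, then $c_k=y_k-k$; and $c_{n+1}=-1$ (so $1\le k+1+c_{k+1}\le n$ for all $1\le k\le n$). A valley of $D$ is an east step immediately followed by a north step; if the east step is the $k$-th east step and the north step is the $\ell$-th north step, the valley is at position $(k,\ell)$, the cell enclosed by these two steps. Billey–Jockusch–Stanley bijection: put a cross in every valley cell of $D$; then, for the columns $i=1,2,\dots,n$ in this order, if column $i$ does not yet contain a cross, put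 a cross in the lowest cell of column $i$ whose row does not yet contain a cross. The crosses form a permutation matrix, and $\pi(i)$ is the row of the cross in column $i$. *)

theory Defs
  imports Main
begin

text \<open>A lattice path of semilength n is encoded as a list of steps:
  True = north step (0,1), False = east step (1,0).\<close>

definition nN :: "bool list \<Rightarrow> nat \<Rightarrow> nat" where
  "nN w i = length (filter id (take i w))"

definition nE :: "bool list \<Rightarrow> nat \<Rightarrow> nat" where
  "nE w i = length (filter Not (take i w))"

definition dyck_path :: "nat \<Rightarrow> bool list \<Rightarrow> bool" where
  "dyck_path n w \<longleftrightarrow> length w = 2 * n \<and> nN w (length w) = n \<and>
     (\<forall>i \<le> length w. nE w i \<le> nN w i)"

definition north_positions :: "bool list \<Rightarrow> nat list" where
  "north_positions w = filter (\<lambda>p. w ! p) [0..<length w]"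

definition east_positions :: "bool list \<Rightarrow> nat list" where
  "east_positions w = filter (\<lambda>p. \<not> w ! p) [0..<length w]"

text \<open>x_k: the vertical line on which the k-th north step lies (k \<ge> 1).\<close>
definition xk :: "bool list \<Rightarrow> nat \<Rightarrow> nat" where
  "xk w k = nE w (north_positions w ! (k - 1))"

text \<open>y_k: the height of the k-th east step (k \<ge> 1).\<close>
definition yk :: "bool list \<Rightarrow> nat \<Rightarrow> nat" where
  "yk w k = nN w (east_positions w ! (k - 1))"

definition row_area :: "bool list \<Rightarrow> nat \<Rightarrow> int" where
  "row_area w k = (if k = 0 then -1 else int k - 1 - int (xk w k))"

definition col_area :: "nat \<Rightarrow> bool list \<Rightarrow> nat \<Rightarrow> int" where
  "col_area n w k = (if k = n + 1 then -1 else int (yk w k) - int k)"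

text \<open>Valley cells: (column k, row l) where the k-th east step is immediately
  followed by the l-th north step.\<close>
definition valleys :: "bool list \<Rightarrow> (nat \<times> nat) set" where
  "valleys w = {(nE w p + 1, nN w (Suc p) + 1) | p. Suc p < length w \<and> \<not> w ! p \<and> w ! Suc p}"

fun bjs_crosses :: "nat \<Rightarrow> bool list \<Rightarrow> nat \<Rightarrow> (nat \<times> nat) set" where
  "bjs_crosses n w 0 = valleys w"
| "bjs_crosses n w (Suc i) =
     (let C = bjs_crosses n w i in
      if (\<exists>j. (Suc i, j) \<in> C) then C
      else insert (Suc i, LEAST j. 1 \<le> j \<and> j \<le> n \<and> (\<forall>c. (c, j) \<notin> C)) C)"

definition bjs_perm :: "nat \<Rightarrow> bool list \<Rightarrow> nat \<Rightarrow> nat" where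
  "bjs_perm n w i = (THE j. (i, j) \<in> bjs_crosses n w n)"

definition fixset :: "nat \<Rightarrow> bool list \<Rightarrow> nat set" where
  "fixset n w = {k \<in> {1..n}.
     row_area w (nat (int k + 1 + col_area n w (k + 1)))
       = row_area w (k - 1) + col_area n w (k + 1) + 2}"

end

theory Submission imports Defs begin

fun gc :: "nat \<Rightarrow> (nat \<times> nat) set \<Rightarrow> nat \<Rightarrow> (nat \<times> nat) set" where
  "gc n V 0 = V"
| "gc n V (Suc i) =
     (let C = gc n V i in
      if (\<exists>j. (Suc i, j) \<in> C) then C
      else insert (Suc i, LEAST j. 1 \<le> j \<and> j \<le> n \<and> (\<forall>c. (c, j) \<notin> C)) C)"

lemma bjs_gc: "bjs_crosses n w i = gc n (valleys w) i"
  by (induction i) (simp_all add: Let_def)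

locale vset =
  fixes n :: nat and V :: "(nat \<times> nat) set"
  assumes fin: "finite V"
    and bnd: "(c,r) \<in> V \<Longrightarrow> 1 \<le> c \<and> c < r \<and> r \<le> n"
    and injc: "(c,r) \<in> V \<Longrightarrow> (c,r') \<in> V \<Longrightarrow> r = r'"
    and injr: "(c,r) \<in> V \<Longrightarrow> (c',r) \<in> V \<Longrightarrow> c = c'"
begin

definition inv :: "nat \<Rightarrow> (nat \<times> nat) set \<Rightarrow> bool" where
  "inv i C \<longleftrightarrow> V \<subseteq> C \<and> finite C \<and>
    (\<forall>c j. (c,j) \<in> C \<longrightarrow> (c,j) \<in> V \<or> (c \<notin> fst ` V \<and> 1 \<le> c \<and> c \<le> i \<and> 1 \<le> j \<and> j \<le> c \<and> j \<notin> snd ` V)) \<and>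
    (\<forall>c. 1 \<le> c \<and> c \<le> i \<longrightarrow> (\<exists>j. (c,j) \<in> C)) \<and>
    (\<forall>c j j'. (c,j) \<in> C \<longrightarrow> (c,j') \<in> C \<longrightarrow> j = j') \<and>
    (\<forall>c c' j. (c,j) \<in> C \<longrightarrow> (c',j) \<in> C \<longrightarrow> c = c')"

lemma invD:
  assumes "inv i C"
  shows invV: "V \<subseteq> C" and invfin: "finite C"
   and invE: "\<And>c j. (c,j) \<in> C \<Longrightarrow> (c,j) \<in> V \<or> (c \<notin> fst ` V \<and> 1 \<le> c \<and> c \<le> i \<and> 1 \<le> j \<and> j \<le> c \<and> j \<notin> snd ` V)"
   and invC: "\<And>c. 1 \<le> c \<Longrightarrow> c \<le> i \<Longrightarrow> \<exists>j. (c,j) \<in> C"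
   and inv1: "\<And>c j j'. (c,j) \<in> C \<Longrightarrow> (c,j') \<in> C \<Longrightarrow> j = j'"
   and inv2: "\<And>c c' j. (c,j) \<in> C \<Longrightarrow> (c',j) \<in> C \<Longrightarrow> c = c'"
  using assms unfolding inv_def by blast+

lemma inv_bnd:
  assumes "inv i C" "(c,j) \<in> C"
  shows "1 \<le> c" "1 \<le> j" "j \<le> c \<Longrightarrow> c \<le> i" "j \<le> Suc i \<Longrightarrow> c \<le> i"
proof -
  have "(c,j) \<in> V \<or> (c \<notin> fst ` V \<and> 1 \<le> c \<and> c \<le> i \<and> 1 \<le> j \<and> j \<le> c \<and> j \<notin> snd ` V)"
    using invE[OF assms] .
  then show "1 \<le> c" "1 \<le> j" "j \<le> c \<Longrightarrow> c \<le> i" "j \<le> Suc i \<Longrightarrow> c \<le> i"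
    using bnd[of c j] by auto
qed

lemma card_T:
  assumes "inv i C"
  shows "card {p \<in> C. fst p \<le> i} = i"
proof -
  let ?T = "{p \<in> C. fst p \<le> i}"
  have fT: "finite ?T" using invfin[OF assms] by simp
  have inj: "inj_on fst ?T"
  proof (rule inj_onI)
    fix p q assume "p \<in> ?T" "q \<in> ?T" "fst p = fst q"
    then show "p = q" using inv1[OF assms, of "fst p" "snd p" "snd q"] by (cases p, cases q) auto
  qed
  have "fst ` ?T = {1..i}"
  proof
    show "fst ` ?T \<subseteq> {1..i}"
    proof
      fix c assume "c \<in> fst ` ?T"
      then obtain j where cj: "(c,j) \<in> C" "c \<le> i" by auto
      then show "c \<in> {1..i}" using inv_bnd(1)[OF assms cj(1)] by auto
    qed
    show "{1..i} \<subseteq> fst ` ?T"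
    proof
      fix c assume c: "c \<in> {1..i}"
      then obtain j where "(c,j) \<in> C" using invC[OF assms, of c] by auto
      then have "(c,j) \<in> ?T" using c by auto
      then show "c \<in> fst ` ?T" by (metis fst_conv image_eqI)
    qed
  qed
  then have "card (fst ` ?T) = i" by simp
  then show ?thesis using card_image[OF inj] by simp
qed

lemma injS:
  assumes "inv i C"
  shows "inj_on snd {p \<in> C. P p}"
proof (rule inj_onI)
  fix p q assume "p \<in> {p \<in> C. P p}" "q \<in> {p \<in> C. P p}" "snd p = snd q"
  then show "p = q" using inv2[OF assms, of "fst p" "snd p" "fst q"] by (cases p, cases q) auto
qed

lemma free_row:
  assumes "inv i C"
  shows "\<exists>j. 1 \<le> j \<and> j \<le> Suc i \<and> (\<forall>c. (c,j) \<notin> C)"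
proof (rule ccontr)
  assume na: "\<not> ?thesis"
  let ?T = "{p \<in> C. fst p \<le> i}"
  let ?S = "{p \<in> C. snd p \<le> Suc i}"
  have fT: "finite ?T" using invfin[OF assms] by simp
  have ST: "?S \<subseteq> ?T"
  proof
    fix p assume "p \<in> ?S"
    then obtain c j where p: "p = (c,j)" "(c,j) \<in> C" "j \<le> Suc i" by (cases p) auto
    then have "c \<le> i" using inv_bnd(4)[OF assms p(2)] by simp
    then show "p \<in> ?T" using p by auto
  qed
  have "{1..Suc i} \<subseteq> snd ` ?S"
  proof
    fix j assume j: "j \<in> {1..Suc i}"
    then obtain c where "(c,j) \<in> C" using na by auto
    then have "(c,j) \<in> ?S" using j by auto
    then show "j \<in> snd ` ?S" by (metis snd_conv image_eqI)
  qed
  moreover have "finite (snd ` ?S)" using fT ST finite_subset by blast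
  ultimately have "card {1..Suc i} \<le> card (snd ` ?S)" by (rule card_mono[rotated])
  then have "Suc i \<le> card (snd ` ?S)" by simp
  also have "\<dots> = card ?S" using card_image[OF injS[OF assms]] .
  also have "\<dots> \<le> card ?T" using card_mono[OF fT ST] .
  also have "\<dots> = i" using card_T[OF assms] .
  finally show False by simp
qed

lemma inv_gc: "i \<le> n \<Longrightarrow> inv i (gc n V i)"
proof (induction i)
  case 0
  show ?case unfolding inv_def
  proof (intro conjI allI impI)
    show "finite (gc n V 0)" using fin by simp
    fix c j j' assume "(c,j) \<in> gc n V 0" "(c,j') \<in> gc n V 0"
    then show "j = j'" using injc by simp
  next
    fix c c' j assume "(c,j) \<in> gc n V 0" "(c',j) \<in> gc n V 0"
    then show "c = c'" using injr by simp
  qed auto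
next
  case (Suc i)
  let ?C = "gc n V i"
  have I: "inv i ?C" using Suc by simp
  show ?case
  proof (cases "\<exists>j. (Suc i, j) \<in> ?C")
    case True
    then have eq: "gc n V (Suc i) = ?C" by (simp add: Let_def)
    show ?thesis unfolding eq inv_def
    proof (intro conjI allI impI)
      show "V \<subseteq> ?C" using invV[OF I] .
      show "finite ?C" using invfin[OF I] .
    next
      fix c j assume "(c,j) \<in> ?C"
      then show "(c, j) \<in> V \<or> c \<notin> fst ` V \<and> 1 \<le> c \<and> c \<le> Suc i \<and> 1 \<le> j \<and> j \<le> c \<and> j \<notin> snd ` V"
        using invE[OF I] by fastforce
    next
      fix c assume c: "1 \<le> c \<and> c \<le> Suc i"
      show "\<exists>j. (c, j) \<in> ?C"
      proof (cases "c = Suc i")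
        case True then show ?thesis using \<open>\<exists>j. (Suc i, j) \<in> ?C\<close> by simp
      next
        case False then show ?thesis using c invC[OF I, of c] by simp
      qed
    next
      fix c j j' assume "(c,j) \<in> ?C" "(c,j') \<in> ?C"
      then show "j = j'" using inv1[OF I] by blast
    next
      fix c c' j assume "(c,j) \<in> ?C" "(c',j) \<in> ?C"
      then show "c = c'" using inv2[OF I] by blast
    qed
  next
    case False
    define L where "L = (LEAST j. 1 \<le> j \<and> j \<le> n \<and> (\<forall>c. (c, j) \<notin> ?C))"
    have eq: "gc n V (Suc i) = insert (Suc i, L) ?C" using False by (simp add: Let_def L_def)
    obtain j0 where j0: "1 \<le> j0" "j0 \<le> Suc i" "\<forall>c. (c,j0) \<notin> ?C" using free_row[OF I] by blast
    have P0: "1 \<le> j0 \<and> j0 \<le> n \<and> (\<forall>c. (c, j0) \<notin> ?C)" using j0 Suc.prems by auto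
    have PL: "1 \<le> L \<and> L \<le> n \<and> (\<forall>c. (c, L) \<notin> ?C)"
      unfolding L_def by (rule LeastI[of _ j0]) (rule P0)
    have Lle: "L \<le> j0" unfolding L_def by (rule Least_le) (rule P0)
    have nVC: "Suc i \<notin> fst ` V"
    proof
      assume "Suc i \<in> fst ` V"
      then obtain r where "(Suc i, r) \<in> V" by auto
      then show False using False invV[OF I] by auto
    qed
    have nVR: "L \<notin> snd ` V"
    proof
      assume "L \<in> snd ` V"
      then obtain c where "(c, L) \<in> V" by auto
      then show False using PL invV[OF I] by auto
    qed
    show ?thesis unfolding eq inv_def
    proof (intro conjI allI impI)
      show "V \<subseteq> insert (Suc i, L) ?C" using invV[OF I] by auto
      show "finite (insert (Suc i, L) ?C)" using invfin[OF I] by auto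
    next
      fix c j assume cj: "(c,j) \<in> insert (Suc i, L) ?C"
      show "(c, j) \<in> V \<or> c \<notin> fst ` V \<and> 1 \<le> c \<and> c \<le> Suc i \<and> 1 \<le> j \<and> j \<le> c \<and> j \<notin> snd ` V"
      proof (cases "(c,j) = (Suc i, L)")
        case True then show ?thesis using nVC nVR PL Lle j0 by auto
      next
        case False then have "(c,j) \<in> ?C" using cj by blast
        then show ?thesis using invE[OF I] by fastforce
      qed
    next
      fix c assume c: "1 \<le> c \<and> c \<le> Suc i"
      show "\<exists>j. (c, j) \<in> insert (Suc i, L) ?C"
      proof (cases "c = Suc i")
        case True then show ?thesis by auto
      next
        case False then show ?thesis using c invC[OF I, of c] by auto
      qed
    next
      fix c j j' assume "(c,j) \<in> insert (Suc i, L) ?C" "(c,j') \<in> insert (Suc i, L) ?C"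
      then show "j = j'" using inv1[OF I] False by auto
    next
      fix c c' j assume "(c,j) \<in> insert (Suc i, L) ?C" "(c',j) \<in> insert (Suc i, L) ?C"
      then show "c = c'" using inv2[OF I] PL by auto
    qed
  qed
qed

lemma gc_mono: "k \<le> i \<Longrightarrow> gc n V k \<subseteq> gc n V i"
proof (induction i rule: dec_induct)
  case base then show ?case by simp
next
  case (step i) then show ?case by (auto simp: Let_def)
qed

lemma gc_stable: "k \<le> i \<Longrightarrow> (k,j) \<in> gc n V i \<Longrightarrow> (k,j) \<in> gc n V k"
proof (induction i rule: dec_induct)
  case base then show ?case by simp
next
  case (step i) then show ?case by (auto simp: Let_def split: if_splits)
qed

lemma occ_iff:
  assumes I: "inv m C"
  shows "(\<forall>j. 1 \<le> j \<and> j \<le> m \<longrightarrow> (\<exists>c. (c,j) \<in> C)) \<longleftrightarrow> (\<forall>c r. (c,r) \<in> V \<longrightarrow> c \<le> m \<longrightarrow> r \<le> m)"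
proof -
  let ?T = "{p \<in> C. fst p \<le> m}"
  let ?S = "{p \<in> C. snd p \<le> m}"
  have fT: "finite ?T" using invfin[OF I] by simp
  have ST: "?S \<subseteq> ?T"
  proof
    fix p assume "p \<in> ?S"
    then obtain c j where p: "p = (c,j)" "(c,j) \<in> C" "j \<le> m" by (cases p) auto
    then have "c \<le> m" using inv_bnd(4)[OF I p(2)] by simp
    then show "p \<in> ?T" using p by auto
  qed
  have cT: "card ?T = m" using card_T[OF I] .
  have cS: "card (snd ` ?S) = card ?S" using card_image[OF injS[OF I]] .
  have fS: "finite (snd ` ?S)" by (rule finite_imageI[OF finite_subset[OF ST fT]])
  have sub: "snd ` ?S \<subseteq> {1..m}"
  proof
    fix j assume "j \<in> snd ` ?S"
    then obtain c where "(c,j) \<in> C" "j \<le> m" by auto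
    then show "j \<in> {1..m}" using inv_bnd(2)[OF I] by auto
  qed
  show ?thesis
  proof
    assume all: "\<forall>j. 1 \<le> j \<and> j \<le> m \<longrightarrow> (\<exists>c. (c,j) \<in> C)"
    have "{1..m} \<subseteq> snd ` ?S"
    proof
      fix j assume j: "j \<in> {1..m}"
      then obtain c where "(c,j) \<in> C" using all by auto
      then have "(c,j) \<in> ?S" using j by auto
      then show "j \<in> snd ` ?S" by (metis snd_conv image_eqI)
    qed
    then have "card {1..m} \<le> card (snd ` ?S)" by (rule card_mono[OF fS])
    then have "card ?T \<le> card ?S" using cT cS by simp
    then have "card ?S = card ?T" using card_mono[OF fT ST] by linarith
    then have "?S = ?T" by (rule card_subset_eq[OF fT ST])
    show "\<forall>c r. (c,r) \<in> V \<longrightarrow> c \<le> m \<longrightarrow> r \<le> m"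
    proof (intro allI impI)
      fix c r assume cr: "(c,r) \<in> V" "c \<le> m"
      then have "(c,r) \<in> C" using invV[OF I] by blast
      then have "(c,r) \<in> ?T" using cr by simp
      then have "(c,r) \<in> ?S" using \<open>?S = ?T\<close> by simp
      then show "r \<le> m" by simp
    qed
  next
    assume all: "\<forall>c r. (c,r) \<in> V \<longrightarrow> c \<le> m \<longrightarrow> r \<le> m"
    have "?T \<subseteq> ?S"
    proof
      fix p assume "p \<in> ?T"
      then obtain c j where p: "p = (c,j)" "(c,j) \<in> C" "c \<le> m" by (cases p) auto
      have "j \<le> m"
      proof (cases "(c,j) \<in> V")
        case True then show ?thesis using all p(3) by blast
      next
        case False then show ?thesis using invE[OF I p(2)] p(3) by linarith
      qed
      then show "p \<in> ?S" using p by auto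
    qed
    then have "?S = ?T" using ST by blast
    then have "card (snd ` ?S) = card {1..m}" using cT cS by (simp only: card_atLeastAtMost) 
    then have "snd ` ?S = {1..m}" by (rule card_subset_eq[OF finite_atLeastAtMost sub])
    show "\<forall>j. 1 \<le> j \<and> j \<le> m \<longrightarrow> (\<exists>c. (c,j) \<in> C)"
    proof (intro allI impI)
      fix j assume "1 \<le> j \<and> j \<le> m"
      then have "j \<in> snd ` ?S" using \<open>snd ` ?S = {1..m}\<close> by simp
      then obtain p where "p \<in> ?S" "j = snd p" by blast
      then show "\<exists>c. (c,j) \<in> C" by (metis (no_types, lifting) mem_Collect_eq prod.collapse)
    qed
  qed
qed

lemma fix_iff:
  assumes k: "1 \<le> k" "k \<le> n"
  shows "(THE j. (k,j) \<in> gc n V n) = k \<longleftrightarrow> \<not>(\<exists>c r. (c,r) \<in> V \<and> c \<le> k \<and> k \<le> r)"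
proof -
  have In: "inv n (gc n V n)" using inv_gc by simp
  obtain j1 where j1: "(k,j1) \<in> gc n V n" using invC[OF In k] by blast
  have the: "(THE j. (k,j) \<in> gc n V n) = j1"
    by (rule the_equality) (use j1 inv1[OF In] in auto)
  have L1: "(THE j. (k,j) \<in> gc n V n) = k \<longleftrightarrow> (k,k) \<in> gc n V n"
    using the j1 inv1[OF In] by auto
  have L2: "(k,k) \<in> gc n V n \<longleftrightarrow> (k,k) \<in> gc n V k"
    using gc_stable[OF k(2)] gc_mono[OF k(2)] by blast
  obtain m where km: "k = Suc m" using k by (cases k) auto
  let ?C = "gc n V m"
  have I: "inv m ?C" using inv_gc k km by simp
  have kkC: "(k,k) \<notin> ?C" using inv_bnd(3)[OF I, of k k] km by auto
  show ?thesis
  proof (cases "\<exists>j. (k, j) \<in> ?C")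
    case True
    then obtain j where j: "(k,j) \<in> ?C" by blast
    have "(k,j) \<in> V" using invE[OF I j] km by auto
    then have "k < j" using bnd by blast
    moreover have "gc n V k = ?C" using True km by (simp add: Let_def)
    moreover have "\<exists>c r. (c,r) \<in> V \<and> c \<le> k \<and> k \<le> r"
      using \<open>(k,j) \<in> V\<close> \<open>k < j\<close> by (meson le_refl less_imp_le)
    ultimately show ?thesis using L1 L2 kkC by simp
  next
    case False
    define P where "P = (\<lambda>j. 1 \<le> j \<and> j \<le> n \<and> (\<forall>c. (c, j) \<notin> ?C))"
    define L where "L = (LEAST j. P j)"
    have eq: "gc n V k = insert (k, L) ?C" using False km by (simp add: Let_def L_def P_def)
    have L3: "(k,k) \<in> gc n V k \<longleftrightarrow> L = k" using eq kkC by auto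
    obtain j0 where j0: "1 \<le> j0" "j0 \<le> Suc m" "\<forall>c. (c,j0) \<notin> ?C" using free_row[OF I] by blast
    have "P j0" unfolding P_def using j0 km k(2) by simp
    have L4: "L = k \<longleftrightarrow> P k \<and> (\<forall>j<k. \<not> P j)"
    proof
      assume "L = k"
      moreover have "P L" unfolding L_def by (rule LeastI[of P j0, OF \<open>P j0\<close>])
      moreover have "\<forall>j<L. \<not> P j" unfolding L_def using not_less_Least[of _ P] by blast
      ultimately show "P k \<and> (\<forall>j<k. \<not> P j)" by simp
    next
      assume a: "P k \<and> (\<forall>j<k. \<not> P j)"
      show "L = k" unfolding L_def
      proof (rule Least_equality)
        show "P k" using a by simp
        fix y assume "P y" then show "k \<le> y" using a not_less by blast
      qed
    qed
    have nVC: "\<not>(\<exists>r. (k,r) \<in> V)" using False invV[OF I] by blast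
    have Pk: "P k \<longleftrightarrow> \<not>(\<exists>c. (c,k) \<in> V)"
    proof
      assume "P k" then show "\<not>(\<exists>c. (c,k) \<in> V)" using invV[OF I] unfolding P_def by blast
    next
      assume nv: "\<not>(\<exists>c. (c,k) \<in> V)"
      have "\<forall>c. (c, k) \<notin> ?C"
      proof (intro allI notI)
        fix c assume ck: "(c,k) \<in> ?C"
        have "(c,k) \<notin> V" using nv by blast
        then have "k \<le> c \<and> c \<le> m" using invE[OF I ck] by blast
        then show False using km by linarith
      qed
      then show "P k" unfolding P_def using k by simp
    qed
    have Pj: "(\<forall>j<k. \<not> P j) \<longleftrightarrow> (\<forall>j. 1 \<le> j \<and> j \<le> m \<longrightarrow> (\<exists>c. (c,j) \<in> ?C))"
    proof
      assume a: "\<forall>j<k. \<not> P j"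
      show "\<forall>j. 1 \<le> j \<and> j \<le> m \<longrightarrow> (\<exists>c. (c,j) \<in> ?C)"
      proof (intro allI impI)
        fix j assume j: "1 \<le> j \<and> j \<le> m"
        then have "j < k" "j \<le> n" using km k by auto
        then show "\<exists>c. (c,j) \<in> ?C" using a j unfolding P_def by blast
      qed
    next
      assume a: "\<forall>j. 1 \<le> j \<and> j \<le> m \<longrightarrow> (\<exists>c. (c,j) \<in> ?C)"
      show "\<forall>j<k. \<not> P j"
      proof (intro allI impI)
        fix j assume "j < k"
        then have "j \<le> m" using km by simp
        then show "\<not> P j" using a unfolding P_def by blast
      qed
    qed
    have fin: "(\<not>(\<exists>c. (c,k) \<in> V) \<and> (\<forall>c r. (c,r) \<in> V \<longrightarrow> c \<le> m \<longrightarrow> r \<le> m))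
       \<longleftrightarrow> \<not>(\<exists>c r. (c,r) \<in> V \<and> c \<le> k \<and> k \<le> r)"
    proof
      assume a: "\<not>(\<exists>c. (c,k) \<in> V) \<and> (\<forall>c r. (c,r) \<in> V \<longrightarrow> c \<le> m \<longrightarrow> r \<le> m)"
      show "\<not>(\<exists>c r. (c,r) \<in> V \<and> c \<le> k \<and> k \<le> r)"
      proof
        assume "\<exists>c r. (c,r) \<in> V \<and> c \<le> k \<and> k \<le> r"
        then obtain c r where cr: "(c,r) \<in> V" "c \<le> k" "k \<le> r" by blast
        show False
        proof (cases "c = k")
          case True then show False using nVC cr by blast
        next
          case False
          then have "c \<le> m" using cr km by simp
          then have "r \<le> m" using a cr by blast
          then have "r \<noteq> k" using km by simp
          then show False using a cr(3) km \<open>r \<le> m\<close> by simp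
        qed
      qed
    next
      assume a: "\<not>(\<exists>c r. (c,r) \<in> V \<and> c \<le> k \<and> k \<le> r)"
      have "\<not>(\<exists>c. (c,k) \<in> V)"
      proof
        assume "\<exists>c. (c,k) \<in> V"
        then obtain c where "(c,k) \<in> V" by blast
        then have "c < k" using bnd by blast
        then have "c \<le> k" by simp
        then show False using a \<open>(c,k) \<in> V\<close> by blast
      qed
      moreover have "\<forall>c r. (c,r) \<in> V \<longrightarrow> c \<le> m \<longrightarrow> r \<le> m"
      proof (intro allI impI)
        fix c r assume "(c,r) \<in> V" "c \<le> m"
        then have "c \<le> k" using km by simp
        then have "\<not> k \<le> r" using a \<open>(c,r) \<in> V\<close> by blast
        then show "r \<le> m" using km by simp
      qed
      ultimately show "\<not>(\<exists>c. (c,k) \<in> V) \<and> (\<forall>c r. (c,r) \<in> V \<longrightarrow> c \<le> m \<longrightarrow> r \<le> m)" by blast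
    qed
    show ?thesis
      unfolding L1 L2 L3 L4 Pk Pj occ_iff[OF I] fin by (rule refl)
  qed
qed

end


lemma take_eq_map: "q \<le> length w \<Longrightarrow> take q w = map ((!) w) [0..<q]"
  by (simp add: list_eq_iff_nth_eq)

lemma nN_filt: "q \<le> length w \<Longrightarrow> nN w q = length (filter (\<lambda>p. w!p) [0..<q])"
  unfolding nN_def by (simp add: take_eq_map filter_map comp_def)

lemma nE_filt: "q \<le> length w \<Longrightarrow> nE w q = length (filter (\<lambda>p. \<not> w!p) [0..<q])"
  unfolding nE_def by (simp add: take_eq_map filter_map comp_def)

lemma filt_split:
  assumes "q < L" "P q"
  shows "filter P [0..<L] ! length (filter P [0..<q]) = q \<and> length (filter P [0..<q]) < length (filter P [0..<L])"
proof -
  have "[0..<L] = [0..<q] @ q # [Suc q..<L]"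
    using assms(1) by (metis le_add1 less_imp_le_nat upt_add_eq_append upt_conv_Cons add_0 le_add_diff_inverse)
  then have e: "filter P [0..<L] = filter P [0..<q] @ q # filter P [Suc q..<L]" using assms(2) by simp
  show ?thesis unfolding e by (simp add: nth_append)
qed

lemma filt_nth:
  assumes "i < length (filter P [0..<L])"
  shows "filter P [0..<L] ! i < L \<and> P (filter P [0..<L] ! i) \<and> length (filter P [0..<filter P [0..<L] ! i]) = i"
proof -
  let ?F = "filter P [0..<L]"
  let ?q = "?F ! i"
  have "?q \<in> set ?F" using assms by (rule nth_mem)
  then have q: "?q < L" "P ?q" by auto
  have d: "distinct ?F" by simp
  from filt_split[of ?q L P, OF q(1) q(2)] have "?F ! length (filter P [0..<?q]) = ?F ! i" "length (filter P [0..<?q]) < length ?F" by auto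
  then have "length (filter P [0..<?q]) = i" using nth_eq_iff_index_eq[OF d _ assms] by blast
  then show ?thesis using q by simp
qed

lemma nN_Suc: "p < length w \<Longrightarrow> nN w (Suc p) = nN w p + (if w!p then 1 else 0)"
  unfolding nN_def by (simp add: take_Suc_conv_app_nth)

lemma nE_Suc: "p < length w \<Longrightarrow> nE w (Suc p) = nE w p + (if w!p then 0 else 1)"
  unfolding nE_def by (simp add: take_Suc_conv_app_nth)

lemma nNE: "p \<le> length w \<Longrightarrow> nN w p + nE w p = p"
  unfolding nN_def nE_def using sum_length_filter_compl[of id "take p w"] by simp

lemma nN_mono: "p \<le> q \<Longrightarrow> nN w p \<le> nN w q"
proof -
  assume "p \<le> q"
  then obtain d where "q = p + d" using le_Suc_ex by blast
  then show ?thesis unfolding nN_def by (simp add: take_add)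
qed

lemma nE_mono: "p \<le> q \<Longrightarrow> nE w p \<le> nE w q"
proof -
  assume "p \<le> q"
  then obtain d where "q = p + d" using le_Suc_ex by blast
  then show ?thesis unfolding nE_def by (simp add: take_add)
qed

lemma step_ex: "a \<le> b \<Longrightarrow> (f::nat\<Rightarrow>nat) a < f b \<Longrightarrow> \<exists>m. a \<le> m \<and> m < b \<and> f m < f (Suc m)"
proof (induction b)
  case 0 then show ?case by simp
next
  case (Suc b)
  show ?case
  proof (cases "f a < f b \<and> a \<le> b")
    case True then show ?thesis using Suc.IH by (meson less_SucI)
  next
    case False
    then have "a = Suc b \<or> f b \<le> f a" by (metis Suc.prems(1) le_SucE not_less)
    then show ?thesis using Suc.prems by (metis le_SucE less_Suc_eq order_le_less_trans order_less_irrefl)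
  qed
qed

locale dyck =
  fixes n :: nat and w :: "bool list"
  assumes D: "dyck_path n w"
begin

lemma lenw: "length w = 2 * n" using D unfolding dyck_path_def by simp
lemma nN_L: "nN w (length w) = n" using D unfolding dyck_path_def by blast
lemma nE_L: "nE w (length w) = n" using nNE[of "length w" w] nN_L lenw by simp
lemma dy: "p \<le> length w \<Longrightarrow> nE w p \<le> nN w p" using D unfolding dyck_path_def by simp

lemma nN_le: "nN w p \<le> n"
proof -
  have "nN w p \<le> nN w (length w)"
  proof (cases "p \<le> length w")
    case True then show ?thesis by (rule nN_mono)
  next
    case False then show ?thesis unfolding nN_def by simp
  qed
  then show ?thesis using nN_L by simp
qed

lemma lenNP: "length (north_positions w) = n"
  using nN_filt[of "length w" w] nN_L unfolding north_positions_def by simp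
lemma lenEP: "length (east_positions w) = n"
  using nE_filt[of "length w" w] nE_L unfolding east_positions_def by simp

lemma pN: "i < n \<Longrightarrow> north_positions w ! i < length w \<and> w ! (north_positions w ! i) \<and> nN w (north_positions w ! i) = i"
  using filt_nth[of i "\<lambda>p. w!p" "length w"] lenNP nN_filt[of _ w] unfolding north_positions_def
  by (metis less_imp_le_nat)

lemma eE: "i < n \<Longrightarrow> east_positions w ! i < length w \<and> \<not> w ! (east_positions w ! i) \<and> nE w (east_positions w ! i) = i"
  using filt_nth[of i "\<lambda>p. \<not> w!p" "length w"] lenEP nE_filt[of _ w] unfolding east_positions_def
  by (metis less_imp_le_nat)

lemma pN_of: "q < length w \<Longrightarrow> w ! q \<Longrightarrow> north_positions w ! (nN w q) = q \<and> nN w q < n"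
  using filt_split[of q "length w" "\<lambda>p. w!p"] lenNP nN_filt[of q w] unfolding north_positions_def
  by simp

abbreviation "pp i \<equiv> north_positions w ! i"
abbreviation "ee i \<equiv> east_positions w ! i"

lemma pp_strict: "i < i' \<Longrightarrow> i' < n \<Longrightarrow> pp i < pp i'"
proof (rule ccontr)
  assume a: "i < i'" "i' < n" "\<not> pp i < pp i'"
  then have "nN w (pp i') \<le> nN w (pp i)" using nN_mono by simp
  then show False using pN[of i] pN[of i'] a by simp
qed

lemma pp_mono: "i \<le> i' \<Longrightarrow> i' < n \<Longrightarrow> pp i \<le> pp i'"
  using pp_strict by (cases "i = i'") (auto simp: less_imp_le)

lemma xk_le: "1 \<le> r \<Longrightarrow> r \<le> n \<Longrightarrow> xk w r + 1 \<le> r"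
proof -
  assume r: "1 \<le> r" "r \<le> n"
  then have p: "pp (r-1) < length w" "nN w (pp (r-1)) = r - 1" using pN[of "r-1"] by auto
  have "nE w (pp (r-1)) \<le> nN w (pp (r-1))" using dy p(1) by simp
  then show ?thesis unfolding xk_def using p r by simp
qed

lemma xk_mono: "1 \<le> r \<Longrightarrow> r \<le> r' \<Longrightarrow> r' \<le> n \<Longrightarrow> xk w r \<le> xk w r'"
  unfolding xk_def using pp_mono[of "r-1" "r'-1"] nE_mono by simp

lemma valleys_eq: "valleys w = {(xk w r, r) | r. 2 \<le> r \<and> r \<le> n \<and> xk w (r-1) < xk w r}"
proof (intro equalityI subsetI)
  fix v assume "v \<in> valleys w"
  then obtain p where v: "v = (nE w p + 1, nN w (Suc p) + 1)" "Suc p < length w" "\<not> w ! p" "w ! Suc p"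
    unfolding valleys_def by blast
  define i where "i = nN w (Suc p)"
  have pi: "pp i = Suc p" "i < n" using pN_of[OF v(2) v(4)] i_def by auto
  have NE: "nN w (Suc p) = nN w p" "nE w (Suc p) = nE w p + 1" using nN_Suc[of p w] nE_Suc[of p w] v by auto
  have i1: "i \<ge> 1"
  proof (rule ccontr)
    assume "\<not> i \<ge> 1"
    then have "nN w (Suc p) = 0" using i_def by simp
    moreover have "nN w (Suc p) + nE w (Suc p) = Suc p" using nNE v(2) by simp
    moreover have "nE w (Suc p) \<le> nN w (Suc p)" using dy v(2) by simp
    ultimately show False by simp
  qed
  have xr: "xk w (i+1) = nE w p + 1" unfolding xk_def using pi NE by simp
  have "pp (i-1) < pp i" using pp_strict[of "i-1" i] pi i1 by simp
  then have "pp (i-1) \<le> p" using pi by simp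
  then have "nE w (pp (i-1)) \<le> nE w p" using nE_mono by simp
  then have "xk w (i+1-1) < xk w (i+1)" unfolding xk_def using xr[unfolded xk_def] i1 by simp
  then show "v \<in> {(xk w r, r) | r. 2 \<le> r \<and> r \<le> n \<and> xk w (r-1) < xk w r}"
    using v(1) xr i_def pi i1 by (intro CollectI exI[of _ "i+1"]) auto
next
  fix v assume "v \<in> {(xk w r, r) | r. 2 \<le> r \<and> r \<le> n \<and> xk w (r-1) < xk w r}"
  then obtain r where v: "v = (xk w r, r)" "2 \<le> r" "r \<le> n" "xk w (r-1) < xk w r" by blast
  define q where "q = pp (r-1)"
  have q: "q < length w" "w ! q" "nN w q = r - 1" using pN[of "r-1"] v q_def by auto
  have q': "pp (r-2) < q" using pp_strict[of "r-2" "r-1"] v q_def by simp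
  then obtain p where pq: "q = Suc p" by (cases q) auto
  have np: "\<not> w ! p"
  proof
    assume wp: "w ! p"
    have "p < length w" using q pq by simp
    then have e1: "pp (nN w p) = p" using pN_of[of p] wp by simp
    have "nN w q = nN w p + 1" using nN_Suc[of p w] wp pq q by simp
    then have "nN w p = r - 2" using q by simp
    then have "pp (r-2) = p" using e1 by simp
    moreover have "nE w q = nE w p" using nE_Suc[of p w] wp pq q by simp
    ultimately have "xk w (r-1) = xk w r" unfolding xk_def using q_def v(2)
      by (metis Suc_1 diff_diff_left plus_1_eq_Suc)
    then show False using v by simp
  qed
  have "nE w q = nE w p + 1" using nE_Suc[of p w] np pq q by simp
  then have "v = (nE w p + 1, nN w (Suc p) + 1)" using v q pq q_def unfolding xk_def by simp
  then show "v \<in> valleys w" unfolding valleys_def using q pq np by blast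
qed

lemma yk_prop:
  assumes k: "1 \<le> k" "k < n" and r: "1 \<le> r" "r \<le> n"
  shows "r \<le> yk w (k+1) \<longleftrightarrow> xk w r \<le> k"
proof -
  define e where "e = ee k"
  define q where "q = pp (r-1)"
  have e: "e < length w" "\<not> w ! e" "nE w e = k" using eE[of k] k e_def by auto
  have q: "q < length w" "w ! q" "nN w q = r - 1" using pN[of "r-1"] r q_def by auto
  have Y: "yk w (k+1) = nN w e" unfolding yk_def e_def by simp
  have X: "xk w r = nE w q" unfolding xk_def q_def by simp
  have "q \<noteq> e" using e q by auto
  then consider "q < e" | "e < q" by linarith
  then show ?thesis
  proof cases
    case 1
    then have "nN w (Suc q) \<le> nN w e" "nE w q \<le> nE w e" using nN_mono nE_mono by auto
    moreover have "nN w (Suc q) = r" using nN_Suc[of q w] q r by simp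
    ultimately show ?thesis using Y X e by simp
  next
    case 2
    then have "nN w e \<le> nN w q" "nE w (Suc e) \<le> nE w q" using nN_mono nE_mono by auto
    moreover have "nE w (Suc e) = k + 1" using nE_Suc[of e w] e by simp
    ultimately show ?thesis using Y X q r by simp
  qed
qed

lemma yk_le: "yk w c \<le> n" unfolding yk_def using nN_le by simp

lemma vs: "vset n (valleys w)"
proof
  let ?P = "\<lambda>r. 2 \<le> r \<and> r \<le> n \<and> xk w (r-1) < xk w r"
  have "valleys w = (\<lambda>r. (xk w r, r)) ` {r. ?P r}" unfolding valleys_eq by blast
  moreover have "finite {r. ?P r}" by (rule finite_subset[of _ "{..n}"]) auto
  ultimately show "finite (valleys w)" by simp
next
  fix c r assume "(c,r) \<in> valleys w"
  then have v: "c = xk w r" "2 \<le> r" "r \<le> n" "xk w (r-1) < xk w r" unfolding valleys_eq by auto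
  then show "1 \<le> c \<and> c < r \<and> r \<le> n" using xk_le[of r] by simp
next
  fix c r r' assume a: "(c,r) \<in> valleys w" "(c,r') \<in> valleys w"
  then have v: "c = xk w r" "2 \<le> r" "r \<le> n" "xk w (r-1) < xk w r"
    and v': "c = xk w r'" "2 \<le> r'" "r' \<le> n" "xk w (r'-1) < xk w r'" unfolding valleys_eq by auto
  show "r = r'"
  proof (rule ccontr)
    assume "r \<noteq> r'"
    then consider "r < r'" | "r' < r" by linarith
    then show False
    proof cases
      case 1
      then have "r \<le> r'-1" "r'-1 \<le> n" using v' by simp_all
      then have "xk w r \<le> xk w (r'-1)" using xk_mono[of r "r'-1"] v by simp
      then show False using v v' by simp
    next
      case 2
      then have "r' \<le> r-1" "r-1 \<le> n" using v by simp_all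
      then have "xk w r' \<le> xk w (r-1)" using xk_mono[of r' "r-1"] v' by simp
      then show False using v v' by simp
    qed
  qed
next
  fix c c' r assume "(c,r) \<in> valleys w" "(c',r) \<in> valleys w"
  then show "c = c'" unfolding valleys_eq by auto
qed

lemma cond_eq: "(\<exists>c r. (c,r) \<in> valleys w \<and> c \<le> k \<and> k \<le> r) \<longleftrightarrow>
   (\<exists>r. 2 \<le> r \<and> r \<le> n \<and> xk w (r-1) < xk w r \<and> xk w r \<le> k \<and> k \<le> r)"
  unfolding valleys_eq by blast

lemma fix_cond:
  assumes k: "1 \<le> k" "k \<le> n"
  shows "k \<in> fixset n w \<longleftrightarrow> \<not>(\<exists>r. 2 \<le> r \<and> r \<le> n \<and> xk w (r-1) < xk w r \<and> xk w r \<le> k \<and> k \<le> r)"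
proof -
  define Y where "Y = (if k = n then n else yk w (k+1))"
  have HY: "\<And>r. 1 \<le> r \<Longrightarrow> r \<le> n \<Longrightarrow> r \<le> Y \<longleftrightarrow> xk w r \<le> k"
  proof -
    fix r assume r: "1 \<le> r" "r \<le> n"
    show "r \<le> Y \<longleftrightarrow> xk w r \<le> k"
    proof (cases "k = n")
      case True then show ?thesis using xk_le[OF r] r Y_def by simp
    next
      case False then show ?thesis using yk_prop[OF k(1) _ r] k Y_def by simp
    qed
  qed
  have Yn: "Y \<le> n" using Y_def yk_le by simp
  have kY: "k \<le> Y" using HY[OF k] xk_le[OF k] by simp
  have col: "col_area n w (k+1) = int Y - int k - 1"
    unfolding col_area_def Y_def by simp
  have idx: "nat (int k + 1 + col_area n w (k + 1)) = Y" using col by simp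
  define x' where "x' = (\<lambda>m. if m = 0 then 0 else xk w m)"
  have x'mono: "\<And>a b. a \<le> b \<Longrightarrow> b \<le> n \<Longrightarrow> x' a \<le> x' b"
    unfolding x'_def using xk_mono by auto
  have x'1: "x' 1 = 0" unfolding x'_def using xk_le[of 1] k by simp
  have fs: "k \<in> fixset n w \<longleftrightarrow> x' Y = x' (k-1)"
  proof -
    have "k \<in> fixset n w \<longleftrightarrow> row_area w (nat (int k + 1 + col_area n w (k + 1))) = row_area w (k - 1) + col_area n w (k + 1) + 2"
      unfolding fixset_def using k by simp
    also have "\<dots> \<longleftrightarrow> row_area w Y = row_area w (k - 1) + (int Y - int k - 1) + 2"
      using idx by (simp only: col)
    also have "\<dots> \<longleftrightarrow> x' Y = x' (k-1)"
      unfolding row_area_def x'_def using kY k by auto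
    finally show ?thesis .
  qed
  show ?thesis unfolding fs
  proof
    assume eq: "x' Y = x' (k-1)"
    show "\<not>(\<exists>r. 2 \<le> r \<and> r \<le> n \<and> xk w (r-1) < xk w r \<and> xk w r \<le> k \<and> k \<le> r)"
    proof
      assume "\<exists>r. 2 \<le> r \<and> r \<le> n \<and> xk w (r-1) < xk w r \<and> xk w r \<le> k \<and> k \<le> r"
      then obtain r where r: "2 \<le> r" "r \<le> n" "xk w (r-1) < xk w r" "xk w r \<le> k" "k \<le> r" by blast
      have rY: "r \<le> Y" using HY[of r] r by simp
      have "x' (k-1) \<le> x' (r-1)" using x'mono[of "k-1" "r-1"] r by simp
      also have "x' (r-1) < x' r" using r unfolding x'_def by simp
      also have "x' r \<le> x' Y" using x'mono[of r Y] rY Yn by simp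
      finally show False using eq by simp
    qed
  next
    assume ne: "\<not>(\<exists>r. 2 \<le> r \<and> r \<le> n \<and> xk w (r-1) < xk w r \<and> xk w r \<le> k \<and> k \<le> r)"
    show "x' Y = x' (k-1)"
    proof (rule ccontr)
      assume "x' Y \<noteq> x' (k-1)"
      moreover have "x' (k-1) \<le> x' Y" using x'mono[of "k-1" Y] kY Yn by simp
      ultimately have lt: "x' (k-1) < x' Y" by simp
      have "k-1 \<le> Y" using kY by simp
      from step_ex[OF this lt] obtain m where m: "k-1 \<le> m" "m < Y" "x' m < x' (Suc m)"
        by blast
      have m1: "m \<ge> 1"
      proof (rule ccontr)
        assume "\<not> m \<ge> 1" then have "m = 0" by simp
        then show False using m x'1 unfolding x'_def by simp
      qed
      have "Suc m \<le> n" using m Yn by simp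
      moreover have "xk w (Suc m) \<le> k" using HY[of "Suc m"] m Yn by simp
      moreover have "xk w m < xk w (Suc m)" using m m1 unfolding x'_def by simp
      moreover have "k \<le> Suc m" using m(1) by simp
      moreover have "2 \<le> Suc m" using m1 by simp
      ultimately have "2 \<le> Suc m \<and> Suc m \<le> n \<and> xk w (Suc m - 1) < xk w (Suc m) \<and> xk w (Suc m) \<le> k \<and> k \<le> Suc m"
        by simp
      then show False using ne by blast
    qed
  qed
qed

theorem main:
  assumes k: "1 \<le> k" "k \<le> n"
  shows "k \<in> fixset n w \<longleftrightarrow> bjs_perm n w k = k"
  unfolding fix_cond[OF k] bjs_perm_def bjs_gc vset.fix_iff[OF vs k] cond_eq ..

end

theorem mainTheorem4:
  fixes n k :: nat and w :: "bool list"
  assumes "dyck_path n w" and "k \<in> {1..n}"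
  shows "k \<in> fixset n w \<longleftrightarrow> bjs_perm n w k = k"
  using dyck.main[OF dyck.intro[OF assms(1)]] assms(2) by simp

end
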